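(* Let $\Sigma$ be a symmetric invertible $p\times p$ matrix, $\mathbf b\in\mathbb R^p$, $\boldsymbol\theta=\Sigma^{-1}\mathbf b$, let $\hat S_n$ be any $p\times p$ matrix and $\hat{\mathbf b}\in\mathbb R^p$, and let $\lambda\ge|\boldsymbol\theta|_1|\hat S_n-\Sigma|_\infty+|\hat{\mathbf b}-\mathbf b|_\infty$. Then $|\hat S_n\boldsymbol\theta-\hat{\mathbf b}|_\infty\le\lambda$, and every solution $\hat{\boldsymbol\theta}$ of $\min_{\boldsymbol\eta\in\mathbb R^p}\{|\boldsymbol\eta|_1:|\hat S_n\boldsymbol\eta-\hat{\mathbf b}|_\infty\le\lambda\}$ satisfies, for all $1\le w\le\infty$, $$|\hat{\boldsymbol\theta}-\boldsymbol\theta|_w\le\big[6D(5\lambda|\Sigma^{-1}|_{L^1})\big]^{1/w}\big(2\lambda|\Sigma^{-1}|_{L^1}\big)^{1-1/w}.$$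
   Context: $|M|_\infty=\max_{j,k}|m_{jk}|$ for a matrix $M$; $|M|_{L^1}=\max_k\sum_j|m_{jk}|$; $|\mathbf a|_w=(\sum_j|a_j|^w)^{1/w}$, $|\mathbf a|_\infty=\max_j|a_j|$; $D(u)=\sum_{j=1}^p(|\theta_j|\wedge u)$ for $u\ge0$. *)

theory Defs
  imports "HOL-Analysis.Analysis"
begin

text \<open>Vectors in R^p are real^'p, p x p matrices are real^'p^'p with M $ j $ k the entry
  in row j, column k.\<close>

definition vec_linf :: "real^'p \<Rightarrow> real" where
  "vec_linf a = Max {\<bar>a $ j\<bar> | j. True}"

definition vec_l1 :: "real^'p \<Rightarrow> real" where
  "vec_l1 a = (\<Sum>j\<in>UNIV. \<bar>a $ j\<bar>)"

definition vec_lw :: "real \<Rightarrow> real^'p \<Rightarrow> real" where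
  "vec_lw w a = (\<Sum>j\<in>UNIV. \<bar>a $ j\<bar> powr w) powr (1 / w)"

definition mat_maxabs :: "real^'p^'p \<Rightarrow> real" where
  "mat_maxabs M = Max {\<bar>M $ j $ k\<bar> | j k. True}"

definition mat_L1 :: "real^'p^'p \<Rightarrow> real" where
  "mat_L1 M = Max {(\<Sum>j\<in>UNIV. \<bar>M $ j $ k\<bar>) | k. True}"

definition Dfun :: "real^'p \<Rightarrow> real \<Rightarrow> real" where
  "Dfun \<theta> u = (\<Sum>j\<in>UNIV. min \<bar>\<theta> $ j\<bar> u)"

text \<open>Real power of a nonnegative base with the convention x^0 = 1 (also for x = 0).\<close>
definition rpow :: "real \<Rightarrow> real \<Rightarrow> real" where
  "rpow x a = (if a = 0 then 1 else x powr a)"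

end

theory Submission
  imports Defs
begin

lemma fin1: "finite {f j | j::'p::finite. True}"
proof - have "{f j | j::'p::finite. True} = range f" by auto thus ?thesis by simp qed
lemma fin2: "finite {f j k | (j::'p::finite) (k::'p). True}"
proof - have "{f j k | (j::'p::finite) (k::'p). True} = (\<lambda>(j,k). f j k) ` UNIV" by auto thus ?thesis by simp qed

lemma linf_ge: "\<bar>a $ j\<bar> \<le> vec_linf a"
  unfolding vec_linf_def by (rule Max_ge) (auto intro: fin1[of "\<lambda>j. \<bar>a $ j\<bar>", simplified])

lemma linf_le: "(\<And>j. \<bar>a $ j\<bar> \<le> c) \<Longrightarrow> vec_linf a \<le> c"
  unfolding vec_linf_def by (subst Max_le_iff) (auto intro: fin1[of "\<lambda>j. \<bar>a $ j\<bar>", simplified])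

lemma maxabs_ge: "\<bar>M $ j $ k\<bar> \<le> mat_maxabs M"
  unfolding mat_maxabs_def by (rule Max_ge) (auto intro: fin2[of "\<lambda>j k. \<bar>M $ j $ k\<bar>", simplified])

lemma L1_ge: "(\<Sum>j\<in>UNIV. \<bar>M $ j $ k\<bar>) \<le> mat_L1 M"
  unfolding mat_L1_def by (rule Max_ge) (auto intro: fin1[of "\<lambda>k. (\<Sum>j\<in>UNIV. \<bar>M $ j $ k\<bar>)", simplified])

lemma l1_nonneg: "0 \<le> vec_l1 a" unfolding vec_l1_def by (simp add: sum_nonneg)

lemma maxabs_nonneg: "0 \<le> mat_maxabs M" using maxabs_ge[of M undefined undefined] by linarith
lemma linf_nonneg: "0 \<le> vec_linf a" using linf_ge[of a undefined] by linarith
lemma L1_nonneg: "0 \<le> mat_L1 M" using L1_ge[of M undefined] sum_nonneg[of UNIV "\<lambda>j. \<bar>M $ j $ undefined\<bar>"] by (meson abs_ge_zero order_trans)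

lemma mv_maxabs: "\<bar>(M *v x) $ i\<bar> \<le> mat_maxabs M * vec_l1 x"
proof -
  have "\<bar>(M *v x) $ i\<bar> = \<bar>\<Sum>k\<in>UNIV. M $ i $ k * x $ k\<bar>" by (simp add: matrix_vector_mult_def)
  also have "\<dots> \<le> (\<Sum>k\<in>UNIV. \<bar>M $ i $ k\<bar> * \<bar>x $ k\<bar>)" by (rule order_trans[OF sum_abs]) (simp add: abs_mult)
  also have "\<dots> \<le> (\<Sum>k\<in>UNIV. mat_maxabs M * \<bar>x $ k\<bar>)"
    by (rule sum_mono) (simp add: maxabs_ge mult_right_mono)
  also have "\<dots> = mat_maxabs M * vec_l1 x" by (simp add: vec_l1_def sum_distrib_left)
  finally show ?thesis .
qed

lemma mv_L1: assumes "transpose M = M" shows "\<bar>(M *v x) $ i\<bar> \<le> mat_L1 M * vec_linf x"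
proof -
  have sym: "M $ i $ k = M $ k $ i" for k using assms by (metis transpose_def vec_lambda_beta)
  have "\<bar>(M *v x) $ i\<bar> = \<bar>\<Sum>k\<in>UNIV. M $ i $ k * x $ k\<bar>" by (simp add: matrix_vector_mult_def)
  also have "\<dots> \<le> (\<Sum>k\<in>UNIV. \<bar>M $ k $ i\<bar> * \<bar>x $ k\<bar>)" by (rule order_trans[OF sum_abs]) (simp add: abs_mult sym)
  also have "\<dots> \<le> (\<Sum>k\<in>UNIV. \<bar>M $ k $ i\<bar> * vec_linf x)"
    by (rule sum_mono) (simp add: linf_ge mult_left_mono)
  also have "\<dots> = (\<Sum>k\<in>UNIV. \<bar>M $ k $ i\<bar>) * vec_linf x" by (simp add: sum_distrib_right)
  also have "\<dots> \<le> mat_L1 M * vec_linf x" by (rule mult_right_mono[OF L1_ge linf_nonneg])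
  finally show ?thesis .
qed

lemma inv_props:
  fixes A :: "real^'p^'p"
  assumes "invertible A"
  shows "A ** matrix_inv A = mat 1" "matrix_inv A ** A = mat 1"
  using someI_ex[OF assms[unfolded invertible_def]] unfolding matrix_inv_def by auto

lemma inv_sym:
  fixes A :: "real^'p^'p"
  assumes "invertible A" "transpose A = A"
  shows "transpose (matrix_inv A) = matrix_inv A"
proof -
  let ?O = "matrix_inv A"
  have "transpose ?O ** A = mat 1"
    by (metis assms(2) inv_props(1)[OF assms(1)] matrix_transpose_mul transpose_mat)
  then have "transpose ?O = (transpose ?O ** A) ** ?O"
    by (metis inv_props(1)[OF assms(1)] matrix_mul_assoc matrix_mul_rid)
  then show ?thesis using \<open>transpose ?O ** A = mat 1\<close> by (simp add: matrix_mul_lid)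
qed

lemma coord_bound:
  fixes t h d :: real
  assumes "\<bar>h\<bar> \<le> d"
  shows "\<bar>h\<bar> \<le> \<bar>t + h\<bar> - \<bar>t\<bar> + 2 * min \<bar>t\<bar> d"
  using assms by (auto simp: min_def abs_if split: if_splits)

lemma Dfun_nonneg: "0 \<le> u \<Longrightarrow> 0 \<le> Dfun t u"
  unfolding Dfun_def by (rule sum_nonneg) auto

lemma Dfun_mono: "u \<le> v \<Longrightarrow> Dfun t u \<le> Dfun t v"
  unfolding Dfun_def by (rule sum_mono) auto

lemma lw_bound:
  fixes h :: "real^'p"
  assumes w: "w \<ge> 1" and hd: "\<And>j. \<bar>h $ j\<bar> \<le> d" and d: "0 \<le> d"
    and l1: "vec_l1 h \<le> E"
  shows "vec_lw w h \<le> rpow E (1 / w) * rpow d (1 - 1 / w)"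
proof (cases "w = 1")
  case True
  have E: "0 \<le> E" using l1 l1_nonneg[of h] by linarith
  have "vec_lw w h = vec_l1 h" using True by (simp add: vec_lw_def vec_l1_def sum_nonneg)
  then show ?thesis using True l1 E by (simp add: rpow_def)
next
  case False
  hence w1: "w > 1" using w by simp
  have E: "0 \<le> E" using l1 l1_nonneg[of h] by linarith
  have rp1: "rpow E (1 / w) = E powr (1/w)" using w1 by (simp add: rpow_def)
  have rp2: "rpow d (1 - 1 / w) = d powr (1 - 1/w)" using w1 by (simp add: rpow_def)
  show ?thesis
  proof (cases "d = 0")
    case True
    hence "\<And>j. h $ j = 0" using hd by (metis abs_le_zero_iff)
    hence "vec_lw w h = 0" using w1 by (simp add: vec_lw_def)
    then show ?thesis by (simp add: rp1 rp2)
  next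
    case False
    hence dpos: "d > 0" using d by simp
    have c: "\<bar>h $ j\<bar> powr w \<le> \<bar>h $ j\<bar> * d powr (w - 1)" for j
    proof (cases "h $ j = 0")
      case True then show ?thesis by simp
    next
      case False
      have "\<bar>h $ j\<bar> powr w = \<bar>h $ j\<bar> powr 1 * \<bar>h $ j\<bar> powr (w - 1)"
        by (subst powr_add[symmetric]) simp
      also have "\<dots> = \<bar>h $ j\<bar> * \<bar>h $ j\<bar> powr (w - 1)" by simp
      also have "\<dots> \<le> \<bar>h $ j\<bar> * d powr (w - 1)"
        by (rule mult_left_mono) (use hd w1 in \<open>auto intro: powr_mono2\<close>)
      finally show ?thesis .
    qed
    have A: "(\<Sum>j\<in>UNIV. \<bar>h $ j\<bar> powr w) \<le> E * d powr (w - 1)"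
    proof -
      have "(\<Sum>j\<in>UNIV. \<bar>h $ j\<bar> powr w) \<le> (\<Sum>j\<in>UNIV. \<bar>h $ j\<bar> * d powr (w - 1))"
        by (rule sum_mono) (rule c)
      also have "\<dots> = vec_l1 h * d powr (w - 1)" by (simp add: vec_l1_def sum_distrib_right)
      also have "\<dots> \<le> E * d powr (w - 1)" by (rule mult_right_mono[OF l1]) simp
      finally show ?thesis .
    qed
    have "vec_lw w h \<le> (E * d powr (w - 1)) powr (1 / w)"
      unfolding vec_lw_def by (rule powr_mono2) (use A w1 in \<open>auto intro: sum_nonneg\<close>)
    also have "\<dots> = E powr (1/w) * (d powr (w - 1)) powr (1 / w)"
      using E by (simp add: powr_mult)
    also have "\<dots> = E powr (1/w) * d powr (1 - 1/w)"
      using w1 by (simp add: powr_powr diff_divide_distrib)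
    finally show ?thesis by (simp add: rp1 rp2)
  qed
qed

theorem mainTheorem6:
  fixes \<Sigma> S :: "real^'p^'p" and b bh \<theta> :: "real^'p" and lam :: real
  assumes symm: "transpose \<Sigma> = \<Sigma>"
    and inv: "invertible \<Sigma>"
    and theta: "\<theta> = matrix_inv \<Sigma> *v b"
    and lam_bd: "lam \<ge> vec_l1 \<theta> * mat_maxabs (S - \<Sigma>) + vec_linf (bh - b)"
  shows "vec_linf (S *v \<theta> - bh) \<le> lam \<and>
    (\<forall>\<theta>h :: real^'p.
       (vec_linf (S *v \<theta>h - bh) \<le> lam \<and>
        (\<forall>\<eta>. vec_linf (S *v \<eta> - bh) \<le> lam \<longrightarrow> vec_l1 \<theta>h \<le> vec_l1 \<eta>))
       \<longrightarrow>
       (\<forall>w::real. w \<ge> 1 \<longrightarrow>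
          vec_lw w (\<theta>h - \<theta>) \<le>
            rpow (6 * Dfun \<theta> (5 * lam * mat_L1 (matrix_inv \<Sigma>))) (1 / w) *
            rpow (2 * lam * mat_L1 (matrix_inv \<Sigma>)) (1 - 1 / w)) \<and>
       vec_linf (\<theta>h - \<theta>) \<le> 2 * lam * mat_L1 (matrix_inv \<Sigma>))"
proof -
  define Om where "Om = matrix_inv \<Sigma>"
  define L where "L = mat_L1 Om"
  have Osym: "transpose Om = Om" unfolding Om_def by (rule inv_sym[OF inv symm])
  have L0: "0 \<le> L" unfolding L_def by (rule L1_nonneg)
  have lam0: "0 \<le> lam" using lam_bd l1_nonneg[of \<theta>] maxabs_nonneg[of "S - \<Sigma>"] linf_nonneg[of "bh - b"]
    by (meson add_nonneg_nonneg mult_nonneg_nonneg order_trans)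
  have Sth: "\<Sigma> *v \<theta> = b" unfolding theta
    by (simp add: matrix_vector_mul_assoc inv_props(1)[OF inv])
  have part1: "vec_linf (S *v \<theta> - bh) \<le> lam"
  proof (rule linf_le)
    fix j
    have "(S *v \<theta> - bh) $ j = ((S - \<Sigma>) *v \<theta>) $ j - (bh - b) $ j"
      using Sth by (simp add: matrix_vector_mult_diff_rdistrib)
    hence "\<bar>(S *v \<theta> - bh) $ j\<bar> \<le> \<bar>((S - \<Sigma>) *v \<theta>) $ j\<bar> + \<bar>(bh - b) $ j\<bar>" by simp
    also have "\<dots> \<le> mat_maxabs (S - \<Sigma>) * vec_l1 \<theta> + vec_linf (bh - b)"
      by (rule add_mono[OF mv_maxabs linf_ge])
    finally show "\<bar>(S *v \<theta> - bh) $ j\<bar> \<le> lam" using lam_bd by (simp add: mult.commute)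
  qed
  show ?thesis
  proof (intro conjI part1 allI impI)
    fix \<theta>h :: "real^'p"
    assume H: "vec_linf (S *v \<theta>h - bh) \<le> lam \<and>
        (\<forall>\<eta>. vec_linf (S *v \<eta> - bh) \<le> lam \<longrightarrow> vec_l1 \<theta>h \<le> vec_l1 \<eta>)"
    have feas: "vec_linf (S *v \<theta>h - bh) \<le> lam" using H by blast
    have opt: "vec_l1 \<theta>h \<le> vec_l1 \<theta>" using H part1 by blast
    define h where "h = \<theta>h - \<theta>"
    define v where "v = \<Sigma> *v \<theta>h - b"
    have vb: "\<bar>v $ j\<bar> \<le> 2 * lam" for j
    proof -
      have "v $ j = (S *v \<theta>h - bh) $ j - ((S - \<Sigma>) *v \<theta>h) $ j + (bh - b) $ j"
        unfolding v_def by (simp add: matrix_vector_mult_diff_rdistrib)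
      hence "\<bar>v $ j\<bar> \<le> \<bar>(S *v \<theta>h - bh) $ j\<bar> + \<bar>((S - \<Sigma>) *v \<theta>h) $ j\<bar> + \<bar>(bh - b) $ j\<bar>" by simp
      also have "\<dots> \<le> lam + mat_maxabs (S - \<Sigma>) * vec_l1 \<theta>h + vec_linf (bh - b)"
        by (intro add_mono order_trans[OF linf_ge feas] mv_maxabs linf_ge)
      also have "\<dots> \<le> lam + mat_maxabs (S - \<Sigma>) * vec_l1 \<theta> + vec_linf (bh - b)"
        using mult_left_mono[OF opt maxabs_nonneg] by simp
      finally show ?thesis using lam_bd by (simp add: mult.commute)
    qed
    have hv: "h = Om *v v"
    proof -
      have "v = \<Sigma> *v h" unfolding v_def h_def using Sth by (simp add: matrix_vector_mult_diff_distrib)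
      hence "Om *v v = (Om ** \<Sigma>) *v h" by (simp add: matrix_vector_mul_assoc)
      thus ?thesis unfolding Om_def by (simp add: inv_props(2)[OF inv])
    qed
    have hb: "\<bar>h $ j\<bar> \<le> 2 * lam * L" for j
    proof -
      have "\<bar>h $ j\<bar> \<le> L * vec_linf v" unfolding hv L_def by (rule mv_L1[OF Osym])
      also have "\<dots> \<le> L * (2 * lam)" by (rule mult_left_mono[OF linf_le[OF vb] L0])
      finally show ?thesis by (simp add: mult.commute mult.left_commute)
    qed
    show "vec_linf (\<theta>h - \<theta>) \<le> 2 * lam * mat_L1 (matrix_inv \<Sigma>)"
      using linf_le[OF hb] unfolding h_def L_def Om_def .
    have d0: "0 \<le> 2 * lam * L" using lam0 L0 by simp
    have l1h: "vec_l1 h \<le> 6 * Dfun \<theta> (5 * lam * L)"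
    proof -
      have "vec_l1 h \<le> (\<Sum>j\<in>UNIV. \<bar>\<theta>h $ j\<bar> - \<bar>\<theta> $ j\<bar> + 2 * min \<bar>\<theta> $ j\<bar> (2 * lam * L))"
        unfolding vec_l1_def
      proof (rule sum_mono)
        fix j :: 'p
        show "\<bar>h $ j\<bar> \<le> \<bar>\<theta>h $ j\<bar> - \<bar>\<theta> $ j\<bar> + 2 * min \<bar>\<theta> $ j\<bar> (2 * lam * L)"
          using coord_bound[OF hb[of j], of "\<theta> $ j"] unfolding h_def by simp
      qed
      also have "\<dots> = vec_l1 \<theta>h - vec_l1 \<theta> + 2 * Dfun \<theta> (2 * lam * L)"
        by (simp add: vec_l1_def Dfun_def sum.distrib sum_subtractf sum_distrib_left)
      also have "\<dots> \<le> 2 * Dfun \<theta> (2 * lam * L)" using opt by simp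
      also have "\<dots> \<le> 2 * Dfun \<theta> (5 * lam * L)"
        using Dfun_mono[of "2 * lam * L" "5 * lam * L" \<theta>] lam0 L0 by (simp add: mult_right_mono)
      also have "\<dots> \<le> 6 * Dfun \<theta> (5 * lam * L)" using Dfun_nonneg[of "5 * lam * L" \<theta>] lam0 L0 by simp
      finally show ?thesis .
    qed
    fix w :: real assume w1: "w \<ge> 1"
    show "vec_lw w (\<theta>h - \<theta>) \<le>
            rpow (6 * Dfun \<theta> (5 * lam * mat_L1 (matrix_inv \<Sigma>))) (1 / w) *
            rpow (2 * lam * mat_L1 (matrix_inv \<Sigma>)) (1 - 1 / w)"
      using lw_bound[OF w1 hb d0 l1h] unfolding h_def L_def Om_def .
  qed
qed

end
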